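(* Let $I$ be a non-empty set. Then $\mathbb{M}_I(\mathbb{C})$ is Johnson pseudo-Connes amenable if and only if $I$ is finite.
   Context: $\mathbb{M}_I(\mathbb{C})$ is the Banach algebra of $I\times I$ complex matrices $[a_{i,j}]$ with finite norm $\sum_{i,j\in I}|a_{i,j}|$ (i.e. $\ell^1(I\times I)$) under matrix multiplication; it is a dual Banach algebra with predual $c_0(I\times I)$. A dual Banach algebra is a Banach algebra $\mathcal{A}$ with a closed $\mathcal{A}$-submodule $\mathcal{A}_*$ of $\mathcal{A}^*$ such that $\mathcal{A}=(\mathcal{A}_* )^*$. For a bimodule $E$, $\sigma wc(E)$ is the set of $x\in E$ for which $a\mapsto a\cdot x$, $a\mapsto x\cdot a$ are weak$^*$-weak continuous. $\mathcal{A}\hat{\otimes}\mathcal{A}$ has actions $a\cdot(b\otimes c)=ab\otimes c$, $(b\otimes c)\cdot a=b\otimes ca$; duals carry the dual actions. $\pi_{\mathcal{A}}$ is the multiplication map $\mathcal{A}\hat{\otimes}\mathcal{A}\to\mathcal{A}$, $i_{\mathcal{A}_*}:\mathcal{A}_*\hookrightarrow\mathcal{A}^*$ the canonical embedding. $\mathcal{A}$ is Johnson pseudo-Connes amenable if there is a (not necessarily bounded) net $(m_\alpha)$ in $(\mathcal{A}\hat{\otimes}\mathcal{A})^{**}$ with $\langle T,a\cdot m_\alpha\rangle=\langle T,m_\alpha\cdot a\rangle$ for all $a\in\mathcal{A}$, $T\in\sigma wc((\mathcal{A}\hat{\otimes}\mathcal{A})^* )$, $\alpha$, and $i_{\mathcal{A}_*}^*\pi_{\mathcal{A}}^{**}(m_\alpha)a\to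 a$ for every $a\in\mathcal{A}$. *)

theory Defs
  imports "HOL-Analysis.Analysis"
begin

definition l1 :: "('x \<Rightarrow> complex) set" where
  "l1 = {u. (\<lambda>x. norm (u x)) summable_on UNIV}"

definition n1 :: "('x \<Rightarrow> complex) \<Rightarrow> real" where
  "n1 u = (\<Sum>\<^sub>\<infinity>x. norm (u x))"

definition c0 :: "('x \<Rightarrow> complex) set" where
  "c0 = {f. \<forall>e>0. finite {x. e \<le> norm (f x)}}"

definition pair :: "('x \<Rightarrow> complex) \<Rightarrow> ('x \<Rightarrow> complex) \<Rightarrow> complex" where
  "pair f a = (\<Sum>\<^sub>\<infinity>x. f x * a x)"

definition dual_space ::
  "('y \<Rightarrow> complex) set \<Rightarrow> (('y \<Rightarrow> complex) \<Rightarrow> real) \<Rightarrow> (('y \<Rightarrow> complex) \<Rightarrow> complex) set" where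
  "dual_space E N = {\<phi>.
      (\<forall>u\<in>E. \<forall>v\<in>E. \<phi> (\<lambda>y. u y + v y) = \<phi> u + \<phi> v) \<and>
      (\<forall>c. \<forall>u\<in>E. \<phi> (\<lambda>y. c * u y) = c * \<phi> u) \<and>
      (\<exists>K. \<forall>u\<in>E. norm (\<phi> u) \<le> K * N u) \<and>
      (\<forall>u. u \<notin> E \<longrightarrow> \<phi> u = 0)}"

definition dual_norm ::
  "('y \<Rightarrow> complex) set \<Rightarrow> (('y \<Rightarrow> complex) \<Rightarrow> real) \<Rightarrow> (('y \<Rightarrow> complex) \<Rightarrow> complex) \<Rightarrow> real" where
  "dual_norm E N \<phi> = Sup {norm (\<phi> u) | u. u \<in> E \<and> N u \<le> 1}"

definition dual_map :: "'a set \<Rightarrow> ('a \<Rightarrow> 'b) \<Rightarrow> ('b \<Rightarrow> complex) \<Rightarrow> ('a \<Rightarrow> complex)" where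
  "dual_map E T \<psi> = (\<lambda>u. if u \<in> E then \<psi> (T u) else 0)"

definition initial_top :: "'a set \<Rightarrow> ('a \<Rightarrow> complex) set \<Rightarrow> 'a topology" where
  "initial_top S Fs = topology_generated_by {S \<inter> f -` U | f U. f \<in> Fs \<and> open U}"

definition mmul :: "('i \<times> 'i \<Rightarrow> complex) \<Rightarrow> ('i \<times> 'i \<Rightarrow> complex) \<Rightarrow> ('i \<times> 'i \<Rightarrow> complex)" where
  "mmul a b = (\<lambda>(i, k). \<Sum>\<^sub>\<infinity>j. a (i, j) * b (j, k))"

type_synonym 'i mat = "'i \<times> 'i \<Rightarrow> complex"
type_synonym 'i tens = "('i \<times> 'i) \<times> ('i \<times> 'i) \<Rightarrow> complex"
type_synonym 'i tens_dual = "'i tens \<Rightarrow> complex"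
type_synonym 'i tens_bidual = "'i tens_dual \<Rightarrow> complex"

text \<open>A (x)^ A = l1(I x I) (x)^ l1(I x I) is identified (isometrically, Grothendieck) with
  l1((I x I) x (I x I)) via b \<otimes> c \<mapsto> ((x,y) \<mapsto> b x * c y).  The module actions
  a.(b \<otimes> c) = ab \<otimes> c and (b \<otimes> c).a = b \<otimes> ca then read as follows.\<close>
definition tens :: "'i mat \<Rightarrow> 'i mat \<Rightarrow> 'i tens" where
  "tens b c = (\<lambda>(x, y). b x * c y)"

definition lact :: "'i mat \<Rightarrow> 'i tens \<Rightarrow> 'i tens" where
  "lact a u = (\<lambda>((i, j), (k, l)). \<Sum>\<^sub>\<infinity>p. a (i, p) * u ((p, j), (k, l)))"

definition ract :: "'i tens \<Rightarrow> 'i mat \<Rightarrow> 'i tens" where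
  "ract u a = (\<lambda>((i, j), (k, l)). \<Sum>\<^sub>\<infinity>p. u ((i, j), (k, p)) * a (p, l))"

definition dlact :: "'i mat \<Rightarrow> 'i tens_dual \<Rightarrow> 'i tens_dual" where
  "dlact a T = (\<lambda>u. if u \<in> l1 then T (ract u a) else 0)"

definition dract :: "'i tens_dual \<Rightarrow> 'i mat \<Rightarrow> 'i tens_dual" where
  "dract T a = (\<lambda>u. if u \<in> l1 then T (lact a u) else 0)"

definition tens_dual_space :: "'i tens_dual set" where
  "tens_dual_space = dual_space l1 n1"

definition tens_bidual_space :: "'i tens_bidual set" where
  "tens_bidual_space = dual_space tens_dual_space (dual_norm l1 n1)"

text \<open>Weak* topology on A = (c0(I x I))^*.\<close>
definition wstar_top :: "'i mat topology" where
  "wstar_top = initial_top l1 {(\<lambda>a. pair f a) | f. f \<in> c0}"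

definition weak_tens_dual_top :: "'i tens_dual topology" where
  "weak_tens_dual_top = initial_top tens_dual_space tens_bidual_space"

definition sigma_wc :: "'i tens_dual set" where
  "sigma_wc = {T \<in> tens_dual_space.
      continuous_map wstar_top weak_tens_dual_top (\<lambda>a. dlact a T) \<and>
      continuous_map wstar_top weak_tens_dual_top (\<lambda>a. dract T a)}"

text \<open>Multiplication map \<pi> : A (x)^ A \<rightarrow> A, \<pi>(b \<otimes> c) = bc.\<close>
definition pimap :: "'i tens \<Rightarrow> 'i mat" where
  "pimap u = (\<lambda>(i, l). \<Sum>\<^sub>\<infinity>j. u ((i, j), (j, l)))"

definition iembed :: "'i mat \<Rightarrow> ('i mat \<Rightarrow> complex)" where
  "iembed f = (\<lambda>a. if a \<in> l1 then pair f a else 0)"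

text \<open>Identification (A_*)^* = A: a functional \<Phi> on c0 corresponds to the matrix
  x \<mapsto> \<Phi>(\<delta>_x) (inverse of a \<mapsto> pair _ a).\<close>
definition predual_elem :: "('i mat \<Rightarrow> complex) \<Rightarrow> 'i mat" where
  "predual_elem \<Phi> = (\<lambda>x. \<Phi> (\<lambda>y. if y = x then 1 else 0))"

definition ipi :: "'i tens_bidual \<Rightarrow> 'i mat" where
  "ipi m = predual_elem
      (dual_map c0 iembed
         (dual_map (dual_space (l1 :: 'i mat set) n1) (dual_map l1 pimap) m))"

text \<open>Johnson pseudo-Connes amenability of M_I(C), I = UNIV :: 'i set.  A net is a
  family indexed by the type of (A (x)^ A)^** directed by a proper filter F.
  <T, a.m> = <T.a, m> and <T, m.a> = <a.T, m>.\<close>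
definition johnson_pseudo_connes_amenable :: "'i itself \<Rightarrow> bool" where
  "johnson_pseudo_connes_amenable _ \<longleftrightarrow>
     (\<exists>(F :: 'i tens_bidual filter) (m :: 'i tens_bidual \<Rightarrow> 'i tens_bidual).
        F \<noteq> bot \<and>
        (\<forall>\<alpha>. m \<alpha> \<in> tens_bidual_space \<and>
              (\<forall>a \<in> (l1 :: 'i mat set). \<forall>T \<in> sigma_wc. m \<alpha> (dract T a) = m \<alpha> (dlact a T))) \<and>
        (\<forall>a \<in> (l1 :: 'i mat set).
           ((\<lambda>\<alpha>. n1 (\<lambda>x. mmul (ipi (m \<alpha>)) a x - a x)) \<longlongrightarrow> 0) F))"

end

theory Submission
  imports Defs
begin

definition dlt :: "'x \<Rightarrow> 'x \<Rightarrow> complex" where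
  "dlt x = (\<lambda>y. if y = x then 1 else 0)"

lemma l1_iff: "u \<in> l1 \<longleftrightarrow> (\<lambda>x. norm (u x)) summable_on UNIV"
  by (simp add: l1_def)

lemma l1_summable: "u \<in> l1 \<Longrightarrow> u summable_on A"
  by (meson abs_summable_summable l1_iff summable_on_subset top_greatest)

lemma l1_abs_summable: "u \<in> l1 \<Longrightarrow> (\<lambda>x. norm (u x)) summable_on A"
  unfolding l1_iff by (erule summable_on_subset) simp

lemma n1_nonneg: "n1 u \<ge> 0"
  unfolding n1_def by (simp add: infsum_nonneg)

lemma norm_le_n1: assumes "u \<in> l1" shows "norm (u x) \<le> n1 u"
proof -
  have "infsum (\<lambda>y. norm (u y)) {x} \<le> infsum (\<lambda>y. norm (u y)) UNIV"
    using assms by (intro infsum_mono_neutral) (auto simp: l1_iff)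
  then show ?thesis by (simp add: n1_def)
qed

lemma l1_zero[simp]: "(\<lambda>_. 0) \<in> l1"
  by (simp add: l1_iff)

lemma n1_zero[simp]: "n1 (\<lambda>_. 0) = 0"
  by (simp add: n1_def)

lemma l1_add: "u \<in> l1 \<Longrightarrow> v \<in> l1 \<Longrightarrow> (\<lambda>x. u x + v x) \<in> l1"
  unfolding l1_iff
  by (rule summable_on_comparison_test[where f="\<lambda>x. norm (u x) + norm (v x)"])
     (auto intro: summable_on_add norm_triangle_ineq)

lemma l1_cmult: "u \<in> l1 \<Longrightarrow> (\<lambda>x. c * u x) \<in> l1"
  unfolding l1_iff by (simp add: norm_mult summable_on_cmult_right)

lemma l1_minus: "u \<in> l1 \<Longrightarrow> v \<in> l1 \<Longrightarrow> (\<lambda>x. u x - v x) \<in> l1"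
  using l1_add[of u "\<lambda>x. (-1) * v x"] l1_cmult[of v "-1"] by simp

lemma l1_finite_support: assumes "finite S" "\<And>x. x \<notin> S \<Longrightarrow> u x = 0" shows "u \<in> l1"
proof -
  have "(\<lambda>x. norm (u x)) summable_on S" using assms by simp
  then show ?thesis unfolding l1_iff
    by (subst summable_on_cong_neutral[where T=S and g="\<lambda>x. norm (u x)"]) (use assms in auto)
qed

lemma l1_dlt[simp]: "dlt x \<in> l1"
  by (rule l1_finite_support[of "{x}"]) (auto simp: dlt_def)

lemma infsum_single: "infsum (\<lambda>y. if y = x then c else 0) A = (if x \<in> A then c else 0)"
proof -
  have "infsum (\<lambda>y. if y = x then c else 0) A = infsum (\<lambda>y. if y = x then c else 0) (A \<inter> {x})"
    by (rule infsum_cong_neutral) auto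
  then show ?thesis by (cases "x \<in> A") auto
qed

lemma n1_dlt[simp]: "n1 (dlt x) = 1"
  unfolding n1_def dlt_def by (simp add: if_distrib infsum_single cong: if_cong)

lemma l1_restrict: "u \<in> l1 \<Longrightarrow> (\<lambda>x. if x \<in> S then u x else 0) \<in> l1"
  unfolding l1_iff
  by (rule summable_on_comparison_test[where f="\<lambda>x. norm (u x)"]) auto

lemma l1_reindex: assumes "u \<in> l1" "inj_on \<phi> D"
  shows "(\<lambda>d. norm (u (\<phi> d))) summable_on D"
    and "infsum (\<lambda>d. norm (u (\<phi> d))) D \<le> n1 u"
proof -
  have s: "(\<lambda>y. norm (u y)) summable_on (\<phi> ` D)" using l1_abs_summable[OF assms(1)] .
  then show "(\<lambda>d. norm (u (\<phi> d))) summable_on D"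
    using summable_on_reindex[OF assms(2), of "\<lambda>y. norm (u y)"] by (simp add: o_def)
  have "infsum (\<lambda>d. norm (u (\<phi> d))) D = infsum (\<lambda>y. norm (u y)) (\<phi> ` D)"
    using infsum_reindex[OF assms(2), of "\<lambda>y. norm (u y)"] by (simp add: o_def)
  also have "\<dots> \<le> infsum (\<lambda>y. norm (u y)) UNIV"
    using s assms by (intro infsum_mono_neutral) (auto simp: l1_iff)
  finally show "infsum (\<lambda>d. norm (u (\<phi> d))) D \<le> n1 u" by (simp add: n1_def)
qed

lemma l1_reindex_l1: "u \<in> l1 \<Longrightarrow> inj \<phi> \<Longrightarrow> (\<lambda>d. u (\<phi> d)) \<in> l1"
  using l1_reindex(1)[of u \<phi> UNIV] by (simp add: l1_iff)


lemma l1_collapse: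
  fixes f :: "'a \<times> 'b \<Rightarrow> complex"
  assumes "f \<in> l1"
  shows "(\<lambda>a. infsum (\<lambda>b. f (a, b)) UNIV) \<in> l1"
proof -
  have h: "(\<lambda>x. norm (f x)) summable_on Sigma UNIV (\<lambda>_. UNIV)" using assms by (simp add: l1_iff)
  have "(\<lambda>a. norm (infsum (\<lambda>b. norm (f (a, b))) UNIV)) summable_on UNIV"
    using Infinite_Sum.abs_summable_on_Sigma_iff[where f=f and A=UNIV and B="\<lambda>_. UNIV"] h by auto
  then show ?thesis unfolding l1_iff
    apply (rule summable_on_comparison_test)
     apply (rule order_trans[OF norm_infsum_bound])
    using l1_reindex(1)[OF assms, of "\<lambda>b. (_, b)" UNIV] by (auto simp: inj_on_def)
qed

lemma l1_mp:
  fixes A :: "'a \<times> 'b \<Rightarrow> complex" and B :: "'b \<times> 'c \<Rightarrow> complex"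
  assumes A: "A \<in> l1" and B: "B \<in> l1"
  shows "(\<lambda>(a, c). infsum (\<lambda>b. A (a, b) * B (b, c)) UNIV) \<in> l1"
proof -
  define F where "F = (\<lambda>((a, b), c). A (a, b) * B (b, c))"
  have inner: "((\<lambda>c. norm (F (x, c))) has_sum (norm (A x) * infsum (\<lambda>c. norm (B (snd x, c))) UNIV)) UNIV" for x
  proof -
    have "(\<lambda>c. norm (B (snd x, c))) summable_on UNIV"
      using l1_reindex(1)[OF B, of "\<lambda>c. (snd x, c)" UNIV] by (auto simp: inj_on_def)
    then have "((\<lambda>c. norm (A x) * norm (B (snd x, c))) has_sum (norm (A x) * infsum (\<lambda>c. norm (B (snd x, c))) UNIV)) UNIV"
      by (intro has_sum_cmult_right) (simp add: summable_iff_has_sum_infsum[symmetric])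
    then show ?thesis by (cases x) (simp add: F_def norm_mult)
  qed
  have g: "(\<lambda>x. norm (A x) * infsum (\<lambda>c. norm (B (snd x, c))) UNIV) summable_on UNIV"
  proof (rule summable_on_comparison_test[where f="\<lambda>x. norm (A x) * n1 B"])
    show "(\<lambda>x. norm (A x) * n1 B) summable_on UNIV"
      using A by (intro summable_on_cmult_left) (simp add: l1_iff)
    fix x :: "'a \<times> 'b"
    have "infsum (\<lambda>c. norm (B (snd x, c))) UNIV \<le> n1 B"
      using l1_reindex(2)[OF B, of "\<lambda>c. (snd x, c)" UNIV] by (auto simp: inj_on_def)
    then show "norm (A x) * infsum (\<lambda>c. norm (B (snd x, c))) UNIV \<le> norm (A x) * n1 B"
      by (simp add: mult_left_mono)
    show "0 \<le> norm (A x) * infsum (\<lambda>c. norm (B (snd x, c))) UNIV"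
      by (simp add: infsum_nonneg)
  qed
  have "(\<lambda>z. norm (F z)) summable_on Sigma UNIV (\<lambda>_. UNIV)"
    by (rule summable_on_SigmaI[OF _ g]) (use inner in auto)
  then have F: "F \<in> l1" by (simp add: l1_iff)
  have G: "(\<lambda>z. F ((fst (fst z), snd z), snd (fst z))) \<in> l1"
    by (rule l1_reindex_l1[OF F]) (auto simp: inj_def)
  have "(\<lambda>a. infsum (\<lambda>b. F ((fst a, b), snd a)) UNIV) \<in> l1"
    using l1_collapse[OF G] by simp
  also have "(\<lambda>a. infsum (\<lambda>b. F ((fst a, b), snd a)) UNIV) = (\<lambda>(a, c). infsum (\<lambda>b. A (a, b) * B (b, c)) UNIV)"
    by (auto simp: F_def fun_eq_iff)
  finally show ?thesis .
qed


lemma l1_reindex_summable: "u \<in> l1 \<Longrightarrow> inj_on \<phi> D \<Longrightarrow> (\<lambda>d. u (\<phi> d)) summable_on D"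
  by (rule abs_summable_summable, rule l1_reindex(1))

lemma ract_l1: assumes u: "u \<in> l1" and a: "a \<in> l1" shows "ract u a \<in> l1"
proof -
  define A' where "A' = (\<lambda>(xk, p). u (fst xk, (snd xk, p)))"
  have A': "A' \<in> l1" unfolding A'_def
    using l1_reindex_l1[OF u, of "\<lambda>(xk, p). (fst xk, (snd xk, p))"]
    by (auto simp: inj_def case_prod_unfold)
  define C where "C = (\<lambda>(a', c). infsum (\<lambda>b. A' (a', b) * a (b, c)) UNIV)"
  have C: "C \<in> l1" unfolding C_def by (rule l1_mp[OF A' a])
  have "(\<lambda>z. C ((fst z, fst (snd z)), snd (snd z))) \<in> l1"
    by (rule l1_reindex_l1[OF C]) (auto simp: inj_def prod_eq_iff)
  also have "(\<lambda>z. C ((fst z, fst (snd z)), snd (snd z))) = ract u a"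
    by (auto simp: fun_eq_iff C_def A'_def ract_def)
  finally show ?thesis .
qed

lemma lact_l1: assumes u: "u \<in> l1" and a: "a \<in> l1" shows "lact a u \<in> l1"
proof -
  define B where "B = (\<lambda>(p, r). u ((p, fst r), snd r))"
  have B: "B \<in> l1" unfolding B_def
    using l1_reindex_l1[OF u, of "\<lambda>(p, r). ((p, fst r), snd r)"]
    by (auto simp: inj_def case_prod_unfold)
  define C where "C = (\<lambda>(a', c). infsum (\<lambda>b. a (a', b) * B (b, c)) UNIV)"
  have C: "C \<in> l1" unfolding C_def by (rule l1_mp[OF a B])
  have "(\<lambda>z. C (fst (fst z), (snd (fst z), snd z))) \<in> l1"
    by (rule l1_reindex_l1[OF C]) (auto simp: inj_def prod_eq_iff)
  also have "(\<lambda>z. C (fst (fst z), (snd (fst z), snd z))) = lact a u"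
    by (auto simp: fun_eq_iff C_def B_def lact_def)
  finally show ?thesis .
qed

lemma pimap_l1: assumes u: "u \<in> l1" shows "pimap u \<in> l1"
proof -
  have "(\<lambda>z. u ((fst (fst z), snd z), (snd z, snd (fst z)))) \<in> l1"
    by (rule l1_reindex_l1[OF u]) (auto simp: inj_def prod_eq_iff)
  from l1_collapse[OF this] show ?thesis
    by (simp add: pimap_def case_prod_unfold)
qed

definition psi :: "'i \<times> 'i \<Rightarrow> 'i tens_dual" where
  "psi x = (\<lambda>u. if u \<in> l1 then pimap u x else 0)"

lemma pair_dlt: "pair (dlt x) v = v x"
proof -
  have "pair (dlt x) v = infsum (\<lambda>y. if y = x then v x else 0) UNIV"
    unfolding pair_def dlt_def by (rule infsum_cong) auto
  then show ?thesis by (simp add: infsum_single)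
qed

lemma iembed_dual: "iembed (dlt x) \<in> dual_space l1 n1"
  unfolding dual_space_def iembed_def pair_dlt
  by (auto simp: l1_add l1_cmult intro!: exI[of _ 1] norm_le_n1)

lemma dual_map_pimap: "dual_map l1 pimap (iembed (dlt x)) = psi x"
  by (auto simp: fun_eq_iff dual_map_def iembed_def psi_def pair_dlt pimap_l1)

lemma dlt_c0: "dlt x \<in> c0"
  unfolding c0_def
proof (intro CollectI allI impI)
  fix e :: real assume e: "e > 0"
  show "finite {y. e \<le> norm (dlt x y)}"
    by (rule finite_subset[of _ "{x}"]) (use e in \<open>auto simp: dlt_def split: if_splits\<close>)
qed

lemma ipi_eq: "ipi m x = m (psi x)"
proof -
  have "ipi m x = dual_map (dual_space l1 n1) (dual_map l1 pimap) m (iembed (dlt x))"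
    unfolding ipi_def predual_elem_def dlt_def[symmetric]
    by (simp add: dual_map_def[of c0] dlt_c0)
  also have "\<dots> = m (psi x)"
    by (simp add: dual_map_def[of "dual_space l1 n1"] iembed_dual dual_map_pimap)
  finally show ?thesis .
qed

lemma pimap_add: assumes "u \<in> l1" "v \<in> l1"
  shows "pimap (\<lambda>y. u y + v y) x = pimap u x + pimap v x"
proof -
  obtain i l where x: "x = (i, l)" by (cases x)
  have inj: "inj (\<lambda>j. ((i, j), (j, l)))" by (auto simp: inj_def)
  have s1: "(\<lambda>j. u ((i, j), (j, l))) summable_on UNIV" using l1_reindex_summable[OF assms(1) inj] .
  have s2: "(\<lambda>j. v ((i, j), (j, l))) summable_on UNIV" using l1_reindex_summable[OF assms(2) inj] .
  show ?thesis unfolding x pimap_def using infsum_add[OF s1 s2] by simp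
qed

lemma pimap_cmult: "pimap (\<lambda>y. c * u y) x = c * pimap u x"
  by (cases x) (simp add: pimap_def infsum_cmult_right')

lemma pimap_bound: assumes "u \<in> l1" shows "norm (pimap u x) \<le> n1 u"
proof -
  obtain i l where x: "x = (i, l)" by (cases x)
  have inj: "inj (\<lambda>j. ((i, j), (j, l)))" by (auto simp: inj_def)
  show ?thesis unfolding x pimap_def
    using l1_reindex[OF assms inj] by (auto intro: order_trans[OF norm_infsum_bound])
qed

lemma psi_dual: "psi x \<in> tens_dual_space"
  unfolding tens_dual_space_def dual_space_def psi_def
  by (auto simp: l1_add l1_cmult pimap_add pimap_cmult intro!: exI[of _ 1] pimap_bound)


lemma dual_space_add: assumes "\<phi> \<in> dual_space E N" "\<psi> \<in> dual_space E N"
  shows "(\<lambda>y. \<phi> y + \<psi> y) \<in> dual_space E N"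
proof -
  obtain K1 where K1: "\<forall>u\<in>E. norm (\<phi> u) \<le> K1 * N u" using assms(1) unfolding dual_space_def by blast
  obtain K2 where K2: "\<forall>u\<in>E. norm (\<psi> u) \<le> K2 * N u" using assms(2) unfolding dual_space_def by blast
  have "\<forall>u\<in>E. norm (\<phi> u + \<psi> u) \<le> (K1 + K2) * N u"
  proof
    fix u assume "u \<in> E"
    then have "norm (\<phi> u + \<psi> u) \<le> K1 * N u + K2 * N u"
      using K1 K2 by (meson add_mono norm_triangle_ineq order_trans)
    then show "norm (\<phi> u + \<psi> u) \<le> (K1 + K2) * N u" by (simp add: algebra_simps)
  qed
  then have "\<exists>K. \<forall>u\<in>E. norm (\<phi> u + \<psi> u) \<le> K * N u" by blast
  with assms show ?thesis unfolding dual_space_def by (auto simp: algebra_simps)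
qed

lemma dual_space_cmult: assumes "\<phi> \<in> dual_space E N" shows "(\<lambda>y. c * \<phi> y) \<in> dual_space E N"
proof -
  obtain K where K: "\<forall>u\<in>E. norm (\<phi> u) \<le> K * N u" using assms(1) unfolding dual_space_def by blast
  have "\<forall>u\<in>E. norm (c * \<phi> u) \<le> (norm c * K) * N u"
  proof
    fix u assume "u \<in> E"
    then have "norm c * norm (\<phi> u) \<le> norm c * (K * N u)"
      using K by (simp add: mult_left_mono)
    then show "norm (c * \<phi> u) \<le> (norm c * K) * N u" by (simp add: norm_mult algebra_simps)
  qed
  then have "\<exists>K. \<forall>u\<in>E. norm (c * \<phi> u) \<le> K * N u" by blast
  moreover have "\<forall>u\<in>E. \<forall>v\<in>E. c * \<phi> (\<lambda>y. u y + v y) = c * \<phi> u + c * \<phi> v"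
    using assms unfolding dual_space_def by (simp add: algebra_simps)
  moreover have "\<forall>d. \<forall>u\<in>E. c * \<phi> (\<lambda>y. d * u y) = d * (c * \<phi> u)"
    using assms unfolding dual_space_def by (simp add: algebra_simps)
  moreover have "\<forall>u. u \<notin> E \<longrightarrow> c * \<phi> u = 0"
    using assms unfolding dual_space_def by simp
  ultimately show ?thesis unfolding dual_space_def by blast
qed

lemma dual_space_zero: "(\<lambda>_. 0) \<in> dual_space E N"
  unfolding dual_space_def by (auto intro: exI[of _ 0])

lemma tds_bound: assumes "T \<in> tens_dual_space"
  obtains K where "K \<ge> 0" "\<And>u. u \<in> l1 \<Longrightarrow> norm (T u) \<le> K * n1 u"
proof -
  obtain K where K: "\<And>u. u \<in> l1 \<Longrightarrow> norm (T u) \<le> K * n1 u"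
    using assms unfolding tens_dual_space_def dual_space_def by blast
  have "norm (T u) \<le> max K 0 * n1 u" if "u \<in> l1" for u
  proof -
    have "K * n1 u \<le> max K 0 * n1 u" by (rule mult_right_mono) (auto simp: n1_nonneg)
    then show ?thesis using K[OF that] by linarith
  qed
  then show ?thesis by (intro that[of "max K 0"]) auto
qed

lemma DN1: assumes "\<And>u. u \<in> l1 \<Longrightarrow> norm (\<phi> u) \<le> C * n1 u" "C \<ge> 0"
  shows "dual_norm l1 n1 \<phi> \<le> C"
  unfolding dual_norm_def
proof (rule cSup_least)
  show "{norm (\<phi> u) |u. u \<in> l1 \<and> n1 u \<le> 1} \<noteq> {}"
  proof -
    have "norm (\<phi> (\<lambda>_. 0)) \<in> {norm (\<phi> u) |u. u \<in> l1 \<and> n1 u \<le> 1}"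
      by (auto intro!: exI[of _ "\<lambda>_. 0"])
    then show ?thesis by blast
  qed
  fix x assume "x \<in> {norm (\<phi> u) |u. u \<in> l1 \<and> n1 u \<le> 1}"
  then obtain u where u: "u \<in> l1" "n1 u \<le> 1" "x = norm (\<phi> u)" by auto
  have "C * n1 u \<le> C * 1" using u assms(2) by (intro mult_left_mono) auto
  then show "x \<le> C" using assms(1)[OF u(1)] u by simp
qed

lemma DN2: assumes "\<phi> \<in> tens_dual_space" "u \<in> l1" "n1 u \<le> 1"
  shows "norm (\<phi> u) \<le> dual_norm l1 n1 \<phi>"
proof -
  obtain K where K: "K \<ge> 0" "\<And>u. u \<in> l1 \<Longrightarrow> norm (\<phi> u) \<le> K * n1 u"
    using tds_bound[OF assms(1)] by blast
  have bdd: "bdd_above {norm (\<phi> u) |u. u \<in> l1 \<and> n1 u \<le> 1}"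
  proof (rule bdd_aboveI[of _ K], clarsimp)
    fix v :: "'a tens" assume v: "v \<in> l1" "n1 v \<le> 1"
    have "K * n1 v \<le> K * 1" using v K by (intro mult_left_mono) auto
    then show "norm (\<phi> v) \<le> K" using K(2)[OF v(1)] by simp
  qed
  show ?thesis unfolding dual_norm_def
    by (rule cSup_upper[OF _ bdd]) (use assms in auto)
qed

lemma dual_norm_nonneg: "\<phi> \<in> tens_dual_space \<Longrightarrow> dual_norm l1 n1 \<phi> \<ge> 0"
  using DN2[of \<phi> "\<lambda>_. 0"] by (smt (verit) l1_zero n1_zero norm_ge_zero)

lemma tds_zero_arg: assumes "\<phi> \<in> tens_dual_space" "u \<in> l1" "n1 u = 0" shows "\<phi> u = 0"
proof -
  obtain K where K: "K \<ge> 0" "\<And>u. u \<in> l1 \<Longrightarrow> norm (\<phi> u) \<le> K * n1 u"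
    using tds_bound[OF assms(1)] by blast
  show ?thesis using K(2)[OF assms(2)] assms(3) by simp
qed

lemma DN3: assumes "\<phi> \<in> tens_dual_space" "u \<in> l1"
  shows "norm (\<phi> u) \<le> dual_norm l1 n1 \<phi> * n1 u"
proof (cases "n1 u = 0")
  case True
  then show ?thesis using tds_zero_arg[OF assms] by simp
next
  case False
  then have pos: "n1 u > 0" using n1_nonneg[of u] by simp
  define v where "v = (\<lambda>y. (1 / complex_of_real (n1 u)) * u y)"
  have v: "v \<in> l1" unfolding v_def by (rule l1_cmult[OF assms(2)])
  have nv: "n1 v = n1 u / n1 u"
  proof -
    have "\<And>y. norm (v y) = norm (u y) * (1 / n1 u)"
      unfolding v_def using pos by (simp add: norm_mult norm_divide)
    then have "n1 v = infsum (\<lambda>y. norm (u y) * (1 / n1 u)) UNIV"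
      unfolding n1_def by simp
    also have "\<dots> = n1 u * (1 / n1 u)" unfolding n1_def by (rule infsum_cmult_left')
    finally show ?thesis by simp
  qed
  have lin: "\<phi> v = (1 / complex_of_real (n1 u)) * \<phi> u"
    using assms unfolding v_def tens_dual_space_def dual_space_def by blast
  have "norm (\<phi> v) \<le> dual_norm l1 n1 \<phi>" using DN2[OF assms(1) v] nv pos by simp
  then have "norm (\<phi> u) / n1 u \<le> dual_norm l1 n1 \<phi>" using lin pos by (simp add: norm_mult norm_divide)
  then show ?thesis using pos by (simp add: divide_le_eq)
qed

lemma bidual_bound: assumes "\<Phi> \<in> tens_bidual_space"
  obtains K where "K \<ge> 0" "\<And>\<phi>. \<phi> \<in> tens_dual_space \<Longrightarrow> norm (\<Phi> \<phi>) \<le> K * dual_norm l1 n1 \<phi>"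
proof -
  obtain K where K: "\<And>\<phi>. \<phi> \<in> tens_dual_space \<Longrightarrow> norm (\<Phi> \<phi>) \<le> K * dual_norm l1 n1 \<phi>"
    using assms unfolding tens_bidual_space_def dual_space_def by blast
  have "norm (\<Phi> \<phi>) \<le> max K 0 * dual_norm l1 n1 \<phi>" if "\<phi> \<in> tens_dual_space" for \<phi>
  proof -
    have "K * dual_norm l1 n1 \<phi> \<le> max K 0 * dual_norm l1 n1 \<phi>"
      by (rule mult_right_mono) (auto simp: dual_norm_nonneg[OF that])
    then show ?thesis using K[OF that] by linarith
  qed
  then show ?thesis by (intro that[of "max K 0"]) auto
qed

definition W :: "('d \<Rightarrow> 'z) \<Rightarrow> ('d \<Rightarrow> complex) \<Rightarrow> ('z \<Rightarrow> complex) \<Rightarrow> complex" where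
  "W \<phi> w u = infsum (\<lambda>d. u (\<phi> d) * w d) UNIV"

lemma W_abs_summable: assumes "u \<in> l1" "inj \<phi>" "\<And>d. norm (w d) \<le> M"
  shows "(\<lambda>d. norm (u (\<phi> d) * w d)) summable_on UNIV"
proof (rule summable_on_comparison_test[where f="\<lambda>d. norm (u (\<phi> d)) * M"])
  show "(\<lambda>d. norm (u (\<phi> d)) * M) summable_on UNIV"
    by (rule summable_on_cmult_left) (rule l1_reindex(1)[OF assms(1,2)])
  fix d show "norm (u (\<phi> d) * w d) \<le> norm (u (\<phi> d)) * M"
    using assms(3)[of d] by (simp add: norm_mult mult_left_mono)
qed simp

lemma W_summable: "u \<in> l1 \<Longrightarrow> inj \<phi> \<Longrightarrow> (\<And>d. norm (w d) \<le> M) \<Longrightarrow> (\<lambda>d. u (\<phi> d) * w d) summable_on UNIV"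
  by (rule abs_summable_summable, rule W_abs_summable)

lemma W_bound: assumes "u \<in> l1" "inj \<phi>" "\<And>d. norm (w d) \<le> M"
  shows "norm (W \<phi> w u) \<le> M * n1 u"
proof -
  have M: "M \<ge> 0" using assms(3)[of undefined] norm_ge_zero order_trans by blast
  have "norm (W \<phi> w u) \<le> infsum (\<lambda>d. norm (u (\<phi> d) * w d)) UNIV"
    unfolding W_def by (rule norm_infsum_bound) (rule W_abs_summable[OF assms])
  also have "\<dots> \<le> infsum (\<lambda>d. norm (u (\<phi> d)) * M) UNIV"
    by (rule infsum_mono[OF W_abs_summable[OF assms]])
       (use assms l1_reindex(1)[OF assms(1,2)] in \<open>auto simp: norm_mult mult_left_mono intro: summable_on_cmult_left\<close>)
  also have "\<dots> = infsum (\<lambda>d. norm (u (\<phi> d))) UNIV * M"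
    by (rule infsum_cmult_left') 
  also have "\<dots> \<le> n1 u * M"
    by (rule mult_right_mono[OF l1_reindex(2)[OF assms(1,2)] M])
  finally show ?thesis by (simp add: mult.commute)
qed

lemma W_add_u: assumes "u \<in> l1" "v \<in> l1" "inj \<phi>" "\<And>d. norm (w d) \<le> M"
  shows "W \<phi> w (\<lambda>y. u y + v y) = W \<phi> w u + W \<phi> w v"
  unfolding W_def using infsum_add[OF W_summable[OF assms(1,3,4)] W_summable[OF assms(2,3,4)]]
  by (simp add: distrib_right)

lemma W_cmult_u: "W \<phi> w (\<lambda>y. c * u y) = c * W \<phi> w u"
  unfolding W_def by (simp add: mult.assoc infsum_cmult_right')

lemma W_add_w: assumes "u \<in> l1" "inj \<phi>" "\<And>d. norm (w1 d) \<le> M1" "\<And>d. norm (w2 d) \<le> M2"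
  shows "W \<phi> (\<lambda>d. w1 d + w2 d) u = W \<phi> w1 u + W \<phi> w2 u"
  unfolding W_def using infsum_add[OF W_summable[OF assms(1,2,3)] W_summable[OF assms(1,2,4)]]
  by (simp add: distrib_left)

lemma W_cmult_w: "W \<phi> (\<lambda>d. c * w d) u = c * W \<phi> w u"
  unfolding W_def by (simp add: mult.left_commute infsum_cmult_right')


lemma restr_split: "(\<lambda>y::'x. (if y \<in> S then a y else 0) + (if y \<in> S then 0 else a y)) = (a :: 'x \<Rightarrow> complex)"
  by (rule ext) simp

lemma n1_rest: assumes a: "a \<in> l1" and S: "finite S"
  shows "n1 (\<lambda>y. if y \<in> S then 0 else a y) = n1 a - (\<Sum>x\<in>S. norm (a x))"
proof -
  have s: "(\<lambda>y. norm (a y)) summable_on UNIV" using a by (simp add: l1_iff)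
  have s1: "(\<lambda>y. if y \<in> S then norm (a y) else 0) summable_on UNIV"
    by (rule summable_on_comparison_test[OF s]) auto
  have s2: "(\<lambda>y. if y \<in> S then 0 else norm (a y)) summable_on UNIV"
    by (rule summable_on_comparison_test[OF s]) auto
  have "n1 a = infsum (\<lambda>y. (if y \<in> S then norm (a y) else 0) + (if y \<in> S then 0 else norm (a y))) UNIV"
    unfolding n1_def by (rule infsum_cong) auto
  also have "\<dots> = infsum (\<lambda>y. if y \<in> S then norm (a y) else 0) UNIV + infsum (\<lambda>y. if y \<in> S then 0 else norm (a y)) UNIV"
    by (rule infsum_add[OF s1 s2])
  also have "infsum (\<lambda>y. if y \<in> S then norm (a y) else 0) UNIV = infsum (\<lambda>y. norm (a y)) S"
    by (rule infsum_cong_neutral) auto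
  also have "\<dots> = (\<Sum>x\<in>S. norm (a x))" using S by simp
  also have "infsum (\<lambda>y. if y \<in> S then 0 else norm (a y)) UNIV = n1 (\<lambda>y. if y \<in> S then 0 else a y)"
    unfolding n1_def by (rule infsum_cong) auto
  finally show ?thesis by simp
qed

lemma l1_rest: "a \<in> l1 \<Longrightarrow> (\<lambda>y. if y \<in> S then 0 else a y) \<in> l1"
  unfolding l1_iff
  by (erule summable_on_comparison_test) auto

lemma density:
  fixes g :: "('x \<Rightarrow> complex) \<Rightarrow> complex"
  assumes add: "\<And>a b. a \<in> l1 \<Longrightarrow> b \<in> l1 \<Longrightarrow> g (\<lambda>y. a y + b y) = g a + g b"
    and hom: "\<And>c a. a \<in> l1 \<Longrightarrow> g (\<lambda>y. c * a y) = c * g a"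
    and bnd: "\<And>a. a \<in> l1 \<Longrightarrow> norm (g a) \<le> K * n1 a"
    and a: "a \<in> l1"
  shows "((\<lambda>x. g (dlt x) * a x) has_sum g a) UNIV"
proof -
  have "norm (g (dlt undefined)) \<le> K" using bnd[OF l1_dlt[of undefined]] by simp
  then have K: "K \<ge> 0" by (meson norm_ge_zero order_trans)
  have g0: "g (\<lambda>_. 0) = 0" using hom[of "\<lambda>_. 0" 0] by simp
  have fin: "g (\<lambda>y. if y \<in> S then a y else 0) = (\<Sum>x\<in>S. g (dlt x) * a x)" if S: "finite S" for S
    using S
  proof (induction S rule: finite_induct)
    case empty then show ?case using g0 by simp
  next
    case (insert x S)
    have e: "(\<lambda>y. if y \<in> insert x S then a y else 0) = (\<lambda>y. a x * dlt x y + (if y \<in> S then a y else 0))"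
      using insert.hyps by (auto simp: fun_eq_iff dlt_def)
    have "g (\<lambda>y. if y \<in> insert x S then a y else 0) = g (\<lambda>y. a x * dlt x y) + g (\<lambda>y. if y \<in> S then a y else 0)"
      unfolding e by (rule add) (auto intro: l1_cmult l1_restrict a)
    also have "\<dots> = a x * g (dlt x) + (\<Sum>x\<in>S. g (dlt x) * a x)"
      using hom[of "dlt x" "a x"] insert.IH by simp
    finally show ?case using insert.hyps by (simp add: mult.commute)
  qed
  have sa: "((\<lambda>y. norm (a y)) has_sum n1 a) UNIV"
    using a by (simp add: l1_iff n1_def)
  then have t1: "((\<lambda>S. \<Sum>x\<in>S. norm (a x)) \<longlongrightarrow> n1 a) (finite_subsets_at_top UNIV)"
    by (simp add: has_sum_def)
  have t2: "((\<lambda>S. K * (n1 a - (\<Sum>x\<in>S. norm (a x)))) \<longlongrightarrow> 0) (finite_subsets_at_top UNIV)"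
    using tendsto_mult[OF tendsto_const[of K] tendsto_diff[OF tendsto_const[of "n1 a"] t1]] by simp
  have ev: "eventually (\<lambda>S. norm ((\<Sum>x\<in>S. g (dlt x) * a x) - g a) \<le> K * (n1 a - (\<Sum>x\<in>S. norm (a x)))) (finite_subsets_at_top UNIV)"
  proof (rule eventually_finite_subsets_at_top_weakI)
    fix S :: "'x set" assume S: "finite S"
    have "g a = g (\<lambda>y. (if y \<in> S then a y else 0) + (if y \<in> S then 0 else a y))"
      by (simp only: restr_split)
    also have "\<dots> = g (\<lambda>y. if y \<in> S then a y else 0) + g (\<lambda>y. if y \<in> S then 0 else a y)"
      by (rule add) (auto intro: l1_restrict l1_rest a)
    finally have "(\<Sum>x\<in>S. g (dlt x) * a x) - g a = - g (\<lambda>y. if y \<in> S then 0 else a y)"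
      using fin[OF S] by simp
    then have "norm ((\<Sum>x\<in>S. g (dlt x) * a x) - g a) = norm (g (\<lambda>y. if y \<in> S then 0 else a y))"
      by simp
    also have "\<dots> \<le> K * n1 (\<lambda>y. if y \<in> S then 0 else a y)"
      by (rule bnd) (rule l1_rest[OF a])
    also have "\<dots> = K * (n1 a - (\<Sum>x\<in>S. norm (a x)))"
      using n1_rest[OF a S] by simp
    finally show "norm ((\<Sum>x\<in>S. g (dlt x) * a x) - g a) \<le> K * (n1 a - (\<Sum>x\<in>S. norm (a x)))" .
  qed
  have "((\<lambda>S. (\<Sum>x\<in>S. g (dlt x) * a x) - g a) \<longlongrightarrow> 0) (finite_subsets_at_top UNIV)"
    by (rule Lim_null_comparison[OF ev t2])
  then show ?thesis unfolding has_sum_def by (simp add: LIM_zero_iff)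
qed


lemma dual_space_addD: "\<phi> \<in> dual_space E N \<Longrightarrow> u \<in> E \<Longrightarrow> v \<in> E \<Longrightarrow> \<phi> (\<lambda>y. u y + v y) = \<phi> u + \<phi> v"
  unfolding dual_space_def by simp

lemma dual_space_mulD: "\<phi> \<in> dual_space E N \<Longrightarrow> u \<in> E \<Longrightarrow> \<phi> (\<lambda>y. c * u y) = c * \<phi> u"
  unfolding dual_space_def by simp

lemma dual_space_outD: "\<phi> \<in> dual_space E N \<Longrightarrow> u \<notin> E \<Longrightarrow> \<phi> u = 0"
  unfolding dual_space_def by simp

definition Dw :: "('d \<Rightarrow> ('i \<times> 'i) \<times> ('i \<times> 'i)) \<Rightarrow> ('i mat \<Rightarrow> 'd \<Rightarrow> complex) \<Rightarrow> 'i mat \<Rightarrow> 'i tens_dual" where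
  "Dw \<phi> w a = (\<lambda>u. if u \<in> l1 then W \<phi> (w a) u else 0)"

locale wsys =
  fixes \<phi> :: "'d \<Rightarrow> ('i \<times> 'i) \<times> ('i \<times> 'i)" and w :: "'i mat \<Rightarrow> 'd \<Rightarrow> complex"
  assumes inj: "inj \<phi>"
    and wadd: "\<And>a b. w (\<lambda>y. a y + b y) = (\<lambda>d. w a d + w b d)"
    and wmul: "\<And>c a. w (\<lambda>y. c * a y) = (\<lambda>d. c * w a d)"
    and wbnd: "\<And>a M d. (\<And>x. norm (a x) \<le> M) \<Longrightarrow> norm (w a d) \<le> M"
begin

lemma wbnd_l1: "a \<in> l1 \<Longrightarrow> norm (w a d) \<le> n1 a"
  by (rule wbnd) (rule norm_le_n1)

lemma Dw_tds: assumes a: "a \<in> l1" shows "Dw \<phi> w a \<in> tens_dual_space"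
proof -
  have "\<forall>u\<in>l1. norm (Dw \<phi> w a u) \<le> n1 a * n1 u"
    unfolding Dw_def using W_bound[OF _ inj wbnd_l1[OF a]] by simp
  then have "\<exists>K. \<forall>u\<in>l1. norm (Dw \<phi> w a u) \<le> K * n1 u" by blast
  moreover have "\<forall>u\<in>l1. \<forall>v\<in>l1. Dw \<phi> w a (\<lambda>y. u y + v y) = Dw \<phi> w a u + Dw \<phi> w a v"
    unfolding Dw_def using W_add_u[OF _ _ inj wbnd_l1[OF a]] by (simp add: l1_add)
  moreover have "\<forall>c. \<forall>u\<in>l1. Dw \<phi> w a (\<lambda>y. c * u y) = c * Dw \<phi> w a u"
    unfolding Dw_def by (simp add: l1_cmult W_cmult_u)
  moreover have "\<forall>u. u \<notin> l1 \<longrightarrow> Dw \<phi> w a u = 0" unfolding Dw_def by simp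
  ultimately show ?thesis unfolding tens_dual_space_def dual_space_def by blast
qed

lemma Dw_dn: assumes a: "a \<in> l1" and M: "\<And>x. norm (a x) \<le> M"
  shows "dual_norm l1 n1 (Dw \<phi> w a) \<le> M"
proof (rule DN1)
  show "M \<ge> 0" using M[of undefined] norm_ge_zero order_trans by blast
  fix u :: "'i tens" assume "u \<in> l1"
  then show "norm (Dw \<phi> w a u) \<le> M * n1 u"
    unfolding Dw_def using W_bound[OF _ inj wbnd[OF M]] by simp
qed

lemma Dw_add: assumes "a \<in> l1" "b \<in> l1"
  shows "Dw \<phi> w (\<lambda>y. a y + b y) = (\<lambda>u. Dw \<phi> w a u + Dw \<phi> w b u)"
  unfolding Dw_def wadd using W_add_w[OF _ inj wbnd_l1[OF assms(1)] wbnd_l1[OF assms(2)]]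
  by (auto simp: fun_eq_iff)

lemma Dw_mul: "Dw \<phi> w (\<lambda>y. c * a y) = (\<lambda>u. c * Dw \<phi> w a u)"
  unfolding Dw_def wmul by (auto simp: fun_eq_iff W_cmult_w)

lemma WR: assumes Phi: "\<Phi> \<in> tens_bidual_space"
  shows "\<exists>f\<in>c0. \<forall>a\<in>l1. \<Phi> (Dw \<phi> w a) = pair f a"
proof -
  obtain K where K: "K \<ge> 0" "\<And>\<psi>. \<psi> \<in> tens_dual_space \<Longrightarrow> norm (\<Phi> \<psi>) \<le> K * dual_norm l1 n1 \<psi>"
    using bidual_bound[OF Phi] by blast
  have Padd: "\<Phi> (\<lambda>y. u y + v y) = \<Phi> u + \<Phi> v" if "u \<in> tens_dual_space" "v \<in> tens_dual_space" for u v
    using Phi that unfolding tens_bidual_space_def by (rule dual_space_addD)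
  have Pmul: "\<Phi> (\<lambda>y. c * u y) = c * \<Phi> u" if "u \<in> tens_dual_space" for u c
    using Phi that unfolding tens_bidual_space_def by (rule dual_space_mulD)
  define g where "g a = \<Phi> (Dw \<phi> w a)" for a
  have gadd: "g (\<lambda>y. a y + b y) = g a + g b" if "a \<in> l1" "b \<in> l1" for a b
    unfolding g_def Dw_add[OF that] by (rule Padd) (use that Dw_tds in auto)
  have gmul: "g (\<lambda>y. c * a y) = c * g a" if "a \<in> l1" for c a
    unfolding g_def Dw_mul by (rule Pmul) (use that Dw_tds in auto)
  have gbnd': "norm (g a) \<le> K * M" if "a \<in> l1" "\<And>x. norm (a x) \<le> M" for a M
  proof -
    have "norm (g a) \<le> K * dual_norm l1 n1 (Dw \<phi> w a)" unfolding g_def by (rule K(2)[OF Dw_tds[OF that(1)]])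
    also have "\<dots> \<le> K * M" by (rule mult_left_mono[OF Dw_dn[OF that] K(1)])
    finally show ?thesis .
  qed
  have gbnd: "norm (g a) \<le> K * n1 a" if "a \<in> l1" for a
    using gbnd'[OF that norm_le_n1[OF that]] .
  define f where "f x = g (dlt x)" for x
  have hs: "((\<lambda>x. f x * a x) has_sum g a) UNIV" if "a \<in> l1" for a
    unfolding f_def by (rule density[OF gadd gmul gbnd that])
  have pf: "pair f a = g a" if "a \<in> l1" for a
    unfolding pair_def using hs[OF that] by (rule infsumI)
  have fc0: "f \<in> c0"
    unfolding c0_def
  proof (intro CollectI allI impI)
    fix e :: real assume e: "e > 0"
    show "finite {x. e \<le> norm (f x)}"
    proof (rule ccontr)
      assume inf: "infinite {x. e \<le> norm (f x)}"
      obtain n :: nat where n: "real n * e > K"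
        using reals_Archimedean3[OF e] by blast
      obtain S where S: "S \<subseteq> {x. e \<le> norm (f x)}" "finite S" "card S = n"
        using infinite_arbitrarily_large[OF inf] by blast
      define c where "c x = cnj (f x) / norm (f x)" for x
      define ac where "ac = (\<lambda>y. if y \<in> S then c y else 0)"
      have fpos: "norm (f x) > 0" if "x \<in> S" for x using S(1) that e by auto
      have ac: "ac \<in> l1" unfolding ac_def by (rule l1_finite_support[OF S(2)]) auto
      have acb: "norm (ac y) \<le> 1" for y
        using fpos unfolding ac_def c_def by (auto simp: norm_divide)
      have fc: "f x * c x = of_real (norm (f x))" if "x \<in> S" for x
      proof -
        have "f x * c x = of_real ((norm (f x))\<^sup>2) / of_real (norm (f x))"
          unfolding c_def complex_norm_square by simp
        then show ?thesis using fpos[OF that] by (simp add: power2_eq_square)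
      qed
      have "g ac = infsum (\<lambda>x. f x * ac x) UNIV" using pf[OF ac] by (simp add: pair_def)
      also have "\<dots> = infsum (\<lambda>x. f x * ac x) S"
        by (rule infsum_cong_neutral) (auto simp: ac_def)
      also have "\<dots> = (\<Sum>x\<in>S. of_real (norm (f x)))"
        using S(2) fc by (simp add: ac_def)
      finally have gac: "g ac = of_real (\<Sum>x\<in>S. norm (f x))" by simp
      have "real n * e = (\<Sum>x\<in>S. e)" using S by simp
      also have "\<dots> \<le> (\<Sum>x\<in>S. norm (f x))" using S(1) by (intro sum_mono) auto
      also have "\<dots> = norm (g ac)" unfolding gac norm_of_real by (simp add: sum_nonneg)
      also have "\<dots> \<le> K * 1" by (rule gbnd'[OF ac acb])
      finally show False using n by simp
    qed
  qed
  show ?thesis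
  proof (rule bexI[OF _ fc0], intro ballI)
    fix a :: "'i mat" assume "a \<in> l1"
    then show "\<Phi> (Dw \<phi> w a) = pair f a" using pf unfolding g_def by simp
  qed
qed

end


lemma topspace_wstar: "topspace (wstar_top :: 'i mat topology) = l1"
proof -
  have z: "(\<lambda>_. 0) \<in> (c0 :: 'i mat set)" by (auto simp: c0_def)
  have "(\<lambda>a. pair (\<lambda>_. 0) a) \<in> {(\<lambda>a. pair f a) | f. f \<in> (c0 :: 'i mat set)}"
    using z by blast
  then have "(l1 :: 'i mat set) \<inter> (\<lambda>a. pair (\<lambda>_. 0) a) -` UNIV \<in> {l1 \<inter> f -` U | f U. f \<in> {(\<lambda>a. pair f a) | f. f \<in> (c0 :: 'i mat set)} \<and> open U}"
    by blast
  then show ?thesis unfolding wstar_top_def initial_top_def by auto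
qed

lemma topspace_weak: "topspace (weak_tens_dual_top :: 'i tens_dual topology) = tens_dual_space"
proof -
  have z: "(\<lambda>_. 0) \<in> tens_bidual_space" unfolding tens_bidual_space_def by (rule dual_space_zero)
  have "tens_dual_space \<inter> (\<lambda>_. 0) -` UNIV \<in> {tens_dual_space \<inter> f -` U | f U. f \<in> tens_bidual_space \<and> open U}"
    using z by blast
  then show ?thesis unfolding weak_tens_dual_top_def initial_top_def by auto
qed

lemma cont_weak:
  fixes D :: "'i mat \<Rightarrow> 'i tens_dual"
  assumes D: "\<And>a. a \<in> l1 \<Longrightarrow> D a \<in> tens_dual_space"
    and R: "\<And>\<Phi>. \<Phi> \<in> tens_bidual_space \<Longrightarrow> \<exists>f\<in>c0. \<forall>a\<in>l1. \<Phi> (D a) = pair f a"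
  shows "continuous_map wstar_top weak_tens_dual_top D"
  unfolding weak_tens_dual_top_def initial_top_def
proof (rule continuous_on_generated_topo)
  fix U :: "'i tens_dual set" assume "U \<in> {tens_dual_space \<inter> f -` U | f U. f \<in> tens_bidual_space \<and> open U}"
  then obtain \<Phi> :: "'i tens_bidual" and V where U: "U = tens_dual_space \<inter> \<Phi> -` V" "\<Phi> \<in> tens_bidual_space" "open V" by blast
  obtain f where f: "f \<in> c0" "\<forall>a\<in>l1. \<Phi> (D a) = pair f a" using R[OF U(2)] by blast
  have "D -` U \<inter> topspace wstar_top = l1 \<inter> (\<lambda>a. pair f a) -` V"
    unfolding topspace_wstar U(1) using D f by auto
  also have "openin wstar_top \<dots>"
    unfolding wstar_top_def initial_top_def
    by (rule topology_generated_by_Basis) (use f U in blast)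
  finally show "openin wstar_top (D -` U \<inter> topspace wstar_top)" .
next
  have z: "(\<lambda>_. 0) \<in> tens_bidual_space" unfolding tens_bidual_space_def by (rule dual_space_zero)
  show "D ` topspace wstar_top \<subseteq> \<Union> {tens_dual_space \<inter> f -` U | f U. f \<in> tens_bidual_space \<and> open U}"
    unfolding topspace_wstar using D z by blast
qed


lemma psi_ract: assumes u: "u \<in> l1" and a: "a \<in> l1"
  shows "psi (i, l) (ract u a) = W (\<lambda>(j, p). ((i, j), (j, p))) (\<lambda>(j, p). a (p, l)) u"
proof -
  have inj: "inj (\<lambda>(j::'a, p::'a). ((i, j), (j, p)))" by (auto simp: inj_def)
  have sm: "(\<lambda>d. u ((\<lambda>(j, p). ((i, j), (j, p))) d) * (\<lambda>(j, p). a (p, l)) d) summable_on UNIV"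
    by (rule W_summable[OF u inj, where M="n1 a"]) (auto simp: norm_le_n1[OF a])
  have eq: "(\<lambda>d. u ((\<lambda>(j, p). ((i, j), (j, p))) d) * (\<lambda>(j, p). a (p, l)) d) = (\<lambda>(j, p). u ((i, j), (j, p)) * a (p, l))"
    by auto
  have "psi (i, l) (ract u a) = infsum (\<lambda>j. infsum (\<lambda>p. u ((i, j), (j, p)) * a (p, l)) UNIV) UNIV"
    using ract_l1[OF u a] by (simp add: psi_def) (simp add: pimap_def ract_def)
  also have "\<dots> = infsum (\<lambda>(j, p). u ((i, j), (j, p)) * a (p, l)) UNIV"
    using infsum_Sigma_banach[of "\<lambda>(j, p). u ((i, j), (j, p)) * a (p, l)" UNIV "\<lambda>_. UNIV"] sm eq by simp
  also have "\<dots> = W (\<lambda>(j, p). ((i, j), (j, p))) (\<lambda>(j, p). a (p, l)) u"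
    unfolding W_def eq ..
  finally show ?thesis .
qed

lemma psi_lact: assumes u: "u \<in> l1" and a: "a \<in> l1"
  shows "psi (i, l) (lact a u) = W (\<lambda>(j, p). ((p, j), (j, l))) (\<lambda>(j, p). a (i, p)) u"
proof -
  have inj: "inj (\<lambda>(j::'a, p::'a). ((p, j), (j, l)))" by (auto simp: inj_def)
  have sm: "(\<lambda>d. u ((\<lambda>(j, p). ((p, j), (j, l))) d) * (\<lambda>(j, p). a (i, p)) d) summable_on UNIV"
    by (rule W_summable[OF u inj, where M="n1 a"]) (auto simp: norm_le_n1[OF a])
  have eq: "(\<lambda>d. u ((\<lambda>(j, p). ((p, j), (j, l))) d) * (\<lambda>(j, p). a (i, p)) d) = (\<lambda>(j, p). a (i, p) * u ((p, j), (j, l)))"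
    by (auto simp: mult.commute)
  have "psi (i, l) (lact a u) = infsum (\<lambda>j. infsum (\<lambda>p. a (i, p) * u ((p, j), (j, l))) UNIV) UNIV"
    using lact_l1[OF u a] by (simp add: psi_def) (simp add: pimap_def lact_def)
  also have "\<dots> = infsum (\<lambda>(j, p). a (i, p) * u ((p, j), (j, l))) UNIV"
    using infsum_Sigma_banach[of "\<lambda>(j, p). a (i, p) * u ((p, j), (j, l))" UNIV "\<lambda>_. UNIV"] sm eq by simp
  also have "\<dots> = W (\<lambda>(j, p). ((p, j), (j, l))) (\<lambda>(j, p). a (i, p)) u"
    unfolding W_def eq ..
  finally show ?thesis .
qed

lemma wsys_r: "wsys (\<lambda>(j, p). ((i, j), (j, p))) (\<lambda>a (j, p). a (p, l))"
  by unfold_locales (auto simp: inj_def fun_eq_iff split: prod.splits)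

lemma wsys_l: "wsys (\<lambda>(j, p). ((p, j), (j, l))) (\<lambda>a (j, p). a (i, p))"
  by unfold_locales (auto simp: inj_def fun_eq_iff split: prod.splits)

lemma dlact_psi: "a \<in> l1 \<Longrightarrow> dlact a (psi (i, l)) = Dw (\<lambda>(j, p). ((i, j), (j, p))) (\<lambda>a (j, p). a (p, l)) a"
  by (auto simp: fun_eq_iff dlact_def Dw_def psi_ract)

lemma dract_psi: "a \<in> l1 \<Longrightarrow> dract (psi (i, l)) a = Dw (\<lambda>(j, p). ((p, j), (j, l))) (\<lambda>a (j, p). a (i, p)) a"
  by (auto simp: fun_eq_iff dract_def Dw_def psi_lact)

lemma psi_sigma_wc: "psi x \<in> sigma_wc"
proof -
  obtain i l where x: "x = (i, l)" by (cases x)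
  interpret R: wsys "\<lambda>(j, p). ((i, j), (j, p))" "\<lambda>a (j, p). a (p, l)" by (rule wsys_r)
  interpret L: wsys "\<lambda>(j, p). ((p, j), (j, l))" "\<lambda>a (j, p). a (i, p)" by (rule wsys_l)
  have c1: "continuous_map wstar_top weak_tens_dual_top (\<lambda>a. dlact a (psi (i, l)))"
  proof (rule cont_weak)
    fix a :: "'a mat" assume "a \<in> l1"
    then show "dlact a (psi (i, l)) \<in> tens_dual_space" by (simp add: dlact_psi R.Dw_tds)
  next
    fix \<Phi> :: "'a tens_bidual" assume "\<Phi> \<in> tens_bidual_space"
    from R.WR[OF this] show "\<exists>f\<in>c0. \<forall>a\<in>l1. \<Phi> (dlact a (psi (i, l))) = pair f a"
      by (simp add: dlact_psi)
  qed
  have c2: "continuous_map wstar_top weak_tens_dual_top (\<lambda>a. dract (psi (i, l)) a)"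
  proof (rule cont_weak)
    fix a :: "'a mat" assume "a \<in> l1"
    then show "dract (psi (i, l)) a \<in> tens_dual_space" by (simp add: dract_psi L.Dw_tds)
  next
    fix \<Phi> :: "'a tens_bidual" assume "\<Phi> \<in> tens_bidual_space"
    from L.WR[OF this] show "\<exists>f\<in>c0. \<forall>a\<in>l1. \<Phi> (dract (psi (i, l)) a) = pair f a"
      by (simp add: dract_psi)
  qed
  show ?thesis unfolding sigma_wc_def x using psi_dual c1 c2 by blast
qed


lemma dlt_pair: "dlt (r, s) (p, l) = (if p = r \<and> l = s then 1 else 0)"
  by (simp add: dlt_def)

lemma ract_dlt: "ract u (dlt (r, s)) ((i', j), (k, l')) = (if l' = s then u ((i', j), (k, r)) else 0)"
proof -
  have "ract u (dlt (r, s)) ((i', j), (k, l')) = infsum (\<lambda>p. u ((i', j), (k, p)) * dlt (r, s) (p, l')) UNIV"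
    by (simp add: ract_def)
  also have "\<dots> = infsum (\<lambda>p. if p = r then (if l' = s then u ((i', j), (k, r)) else 0) else 0) UNIV"
    by (rule infsum_cong) (simp add: dlt_pair)
  also have "\<dots> = (if l' = s then u ((i', j), (k, r)) else 0)" by (simp add: infsum_single)
  finally show ?thesis .
qed

lemma lact_dlt: "lact (dlt (r, s)) u ((i', j), (k, l')) = (if i' = r then u ((s, j), (k, l')) else 0)"
proof -
  have "lact (dlt (r, s)) u ((i', j), (k, l')) = infsum (\<lambda>p. dlt (r, s) (i', p) * u ((p, j), (k, l'))) UNIV"
    by (simp add: lact_def)
  also have "\<dots> = infsum (\<lambda>p. if p = s then (if i' = r then u ((s, j), (k, l')) else 0) else 0) UNIV"
    by (rule infsum_cong) (simp add: dlt_pair)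
  also have "\<dots> = (if i' = r then u ((s, j), (k, l')) else 0)" by (simp add: infsum_single)
  finally show ?thesis .
qed

lemma psi_ract_dlt: assumes u: "u \<in> l1"
  shows "psi (i, l) (ract u (dlt (r, s))) = (if l = s then psi (i, r) u else 0)"
proof -
  have v: "ract u (dlt (r, s)) \<in> l1" by (rule ract_l1[OF u l1_dlt])
  have "psi (i, l) (ract u (dlt (r, s))) = infsum (\<lambda>j. ract u (dlt (r, s)) ((i, j), (j, l))) UNIV"
    using v by (simp add: psi_def pimap_def)
  also have "\<dots> = infsum (\<lambda>j. if l = s then u ((i, j), (j, r)) else 0) UNIV"
    by (simp only: ract_dlt)
  also have "\<dots> = (if l = s then psi (i, r) u else 0)"
    using u by (simp add: psi_def pimap_def)
  finally show ?thesis .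
qed

lemma psi_lact_dlt: assumes u: "u \<in> l1"
  shows "psi (i, l) (lact (dlt (r, s)) u) = (if i = r then psi (s, l) u else 0)"
proof -
  have v: "lact (dlt (r, s)) u \<in> l1" by (rule lact_l1[OF u l1_dlt])
  have "psi (i, l) (lact (dlt (r, s)) u) = infsum (\<lambda>j. lact (dlt (r, s)) u ((i, j), (j, l))) UNIV"
    using v by (simp add: psi_def pimap_def)
  also have "\<dots> = infsum (\<lambda>j. if i = r then u ((s, j), (j, l)) else 0) UNIV"
    by (simp only: lact_dlt)
  also have "\<dots> = (if i = r then psi (s, l) u else 0)"
    using u by (simp add: psi_def pimap_def)
  finally show ?thesis .
qed

lemma dlact_psi_dlt: "dlact (dlt (r, s)) (psi (i, l)) = (if l = s then psi (i, r) else (\<lambda>_. 0))"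
  by (auto simp: fun_eq_iff dlact_def psi_ract_dlt) (simp_all add: psi_def)

lemma dract_psi_dlt: "dract (psi (i, l)) (dlt (r, s)) = (if i = r then psi (s, l) else (\<lambda>_. 0))"
  by (auto simp: fun_eq_iff dract_def psi_lact_dlt) (simp_all add: psi_def)

lemma bidual_zero: assumes "m \<in> tens_bidual_space" shows "m (\<lambda>_. 0) = 0"
proof -
  have "m (\<lambda>y. 0 * psi undefined y) = 0 * m (psi undefined)"
    using assms psi_dual unfolding tens_bidual_space_def by (rule dual_space_mulD)
  then show ?thesis by simp
qed

lemma diag_bound: assumes u: "u \<in> l1" and S: "finite S"
  shows "norm (\<Sum>i\<in>S. pimap u (i, i)) \<le> n1 u"
proof -
  have inj: "inj_on (\<lambda>(i, j). ((i, j), (j, i))) (S \<times> UNIV)" by (auto simp: inj_on_def)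
  have sm: "(\<lambda>d. norm (u ((\<lambda>(i, j). ((i, j), (j, i))) d))) summable_on (S \<times> UNIV)"
    by (rule l1_reindex(1)[OF u inj])
  have inj1: "inj (\<lambda>j. ((i, j), (j, i)))" for i by (auto simp: inj_def)
  have "norm (\<Sum>i\<in>S. pimap u (i, i)) \<le> (\<Sum>i\<in>S. norm (pimap u (i, i)))" by (rule norm_sum)
  also have "\<dots> \<le> (\<Sum>i\<in>S. infsum (\<lambda>j. norm (u ((i, j), (j, i)))) UNIV)"
    by (rule sum_mono) (unfold pimap_def, simp, rule norm_infsum_bound, rule l1_reindex(1)[OF u inj1])
  also have "\<dots> = infsum (\<lambda>i. infsum (\<lambda>j. norm (u ((i, j), (j, i)))) UNIV) S"
    using S by simp
  also have "\<dots> = infsum (\<lambda>d. norm (u ((\<lambda>(i, j). ((i, j), (j, i))) d))) (S \<times> UNIV)"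
    using infsum_Sigma_banach[of "\<lambda>d. norm (u ((\<lambda>(i, j). ((i, j), (j, i))) d))" S "\<lambda>_. UNIV"] sm by simp
  also have "\<dots> \<le> n1 u" by (rule l1_reindex(2)[OF u inj])
  finally show ?thesis .
qed

definition PsiS :: "'i set \<Rightarrow> 'i tens_dual" where
  "PsiS S = (\<lambda>u. \<Sum>i\<in>S. psi (i, i) u)"

lemma PsiS_dual: "finite S \<Longrightarrow> PsiS S \<in> tens_dual_space"
proof (induction S rule: finite_induct)
  case empty then show ?case by (simp add: PsiS_def tens_dual_space_def dual_space_zero)
next
  case (insert x S)
  have "PsiS (insert x S) = (\<lambda>u. psi (x, x) u + PsiS S u)" using insert.hyps by (simp add: PsiS_def fun_eq_iff)
  also have "(\<lambda>u. psi (x, x) u + PsiS S u) \<in> dual_space l1 n1"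
    by (rule dual_space_add) (use psi_dual insert.IH in \<open>simp_all add: tens_dual_space_def\<close>)
  finally show ?case by (simp add: tens_dual_space_def)
qed

lemma m_PsiS: assumes m: "m \<in> tens_bidual_space" and S: "finite S"
  shows "m (PsiS S) = (\<Sum>i\<in>S. m (psi (i, i)))"
  using S
proof (induction S rule: finite_induct)
  case empty then show ?case using bidual_zero[OF m] by (simp add: PsiS_def)
next
  case (insert x S)
  have "PsiS (insert x S) = (\<lambda>u. psi (x, x) u + PsiS S u)" using insert.hyps by (simp add: PsiS_def fun_eq_iff)
  then have "m (PsiS (insert x S)) = m (psi (x, x)) + m (PsiS S)"
    using dual_space_addD[OF m[unfolded tens_bidual_space_def] psi_dual PsiS_dual[OF insert.hyps(1)]] by simp
  then show ?case using insert by simp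
qed

lemma PsiS_dn: "finite S \<Longrightarrow> dual_norm l1 n1 (PsiS S) \<le> 1"
  by (rule DN1) (auto simp: PsiS_def psi_def diag_bound)

lemma ipi_zero:
  assumes inf: "infinite (UNIV :: 'i set)"
    and m: "m \<in> tens_bidual_space"
    and comm: "\<forall>a \<in> (l1 :: 'i mat set). \<forall>T \<in> sigma_wc. m (dract T a) = m (dlact a T)"
  shows "ipi m = (\<lambda>_. 0)"
proof -
  have c: "m (dract (psi (i, l)) (dlt (r, s))) = m (dlact (dlt (r, s)) (psi (i, l)))" for i l r s :: 'i
    by (rule comm[rule_format, OF l1_dlt psi_sigma_wc])
  have off: "m (psi (s, l)) = 0" if "s \<noteq> l" for s l :: 'i
    using c[of s l s s] that by (simp add: dlact_psi_dlt dract_psi_dlt bidual_zero[OF m])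
  have diag: "m (psi (l, l)) = m (psi (i, i))" for i l :: 'i
    using c[of i l i l] by (simp add: dlact_psi_dlt dract_psi_dlt)
  define lam where "lam = m (psi (undefined, undefined))"
  obtain K where K: "K \<ge> 0" "\<And>\<phi>. \<phi> \<in> tens_dual_space \<Longrightarrow> norm (m \<phi>) \<le> K * dual_norm l1 n1 \<phi>"
    using bidual_bound[OF m] by blast
  have nb: "real n * norm lam \<le> K" for n
  proof -
    obtain S :: "'i set" where S: "finite S" "card S = n"
      using infinite_arbitrarily_large[OF inf] by blast
    have "(\<Sum>i\<in>S. m (psi (i, i))) = (\<Sum>i\<in>S. lam)"
      unfolding lam_def by (rule sum.cong) (auto intro: diag)
    then have "m (PsiS S) = of_nat n * lam"
      using m_PsiS[OF m S(1)] S by simp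
    then have "real n * norm lam = norm (m (PsiS S))" by (simp add: norm_mult)
    also have "\<dots> \<le> K * dual_norm l1 n1 (PsiS S)" by (rule K(2)[OF PsiS_dual[OF S(1)]])
    also have "\<dots> \<le> K * 1" by (rule mult_left_mono[OF PsiS_dn[OF S(1)] K(1)])
    finally show ?thesis by simp
  qed
  have "lam = 0"
  proof (rule ccontr)
    assume "lam \<noteq> 0"
    then have "norm lam > 0" by simp
    then obtain n :: nat where "real n * norm lam > K" using reals_Archimedean3 by blast
    then show False using nb[of n] by simp
  qed
  then have "m (psi x) = 0" for x
  proof -
    obtain s l where x: "x = (s, l)" by (cases x)
    show ?thesis
    proof (cases "s = l")
      case True then show ?thesis using diag[of s undefined] \<open>lam = 0\<close> x unfolding lam_def by simp
    next
      case False then show ?thesis using off x by simp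
    qed
  qed
  then show ?thesis by (simp add: fun_eq_iff ipi_eq)
qed

lemma amenable_imp_finite:
  assumes "johnson_pseudo_connes_amenable TYPE('i)"
  shows "finite (UNIV :: 'i set)"
proof (rule ccontr)
  assume inf: "infinite (UNIV :: 'i set)"
  have ex: "\<exists>(F :: 'i tens_bidual filter) (m :: 'i tens_bidual \<Rightarrow> 'i tens_bidual).
        F \<noteq> bot \<and>
        (\<forall>\<alpha>. m \<alpha> \<in> tens_bidual_space \<and>
              (\<forall>a \<in> (l1 :: 'i mat set). \<forall>T \<in> sigma_wc. m \<alpha> (dract T a) = m \<alpha> (dlact a T))) \<and>
        (\<forall>a \<in> (l1 :: 'i mat set).
           ((\<lambda>\<alpha>. n1 (\<lambda>x. mmul (ipi (m \<alpha>)) a x - a x)) \<longlongrightarrow> 0) F)"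
    using assms by (simp only: johnson_pseudo_connes_amenable_def)
  then obtain F :: "'i tens_bidual filter" and m :: "'i tens_bidual \<Rightarrow> 'i tens_bidual" where
    H: "F \<noteq> bot \<and>
        (\<forall>\<alpha>. m \<alpha> \<in> tens_bidual_space \<and>
              (\<forall>a \<in> (l1 :: 'i mat set). \<forall>T \<in> sigma_wc. m \<alpha> (dract T a) = m \<alpha> (dlact a T))) \<and>
        (\<forall>a \<in> (l1 :: 'i mat set).
           ((\<lambda>\<alpha>. n1 (\<lambda>x. mmul (ipi (m \<alpha>)) a x - a x)) \<longlongrightarrow> 0) F)"
    by iprover
  have F: "F \<noteq> bot" using H by simp
  have m1: "m \<alpha> \<in> tens_bidual_space" for \<alpha> using H by simp
  have m2: "\<forall>a \<in> (l1 :: 'i mat set). \<forall>T \<in> sigma_wc. m \<alpha> (dract T a) = m \<alpha> (dlact a T)" for \<alpha>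
    using H by simp
  have lim: "((\<lambda>\<alpha>. n1 (\<lambda>x. mmul (ipi (m \<alpha>)) a x - a x)) \<longlongrightarrow> 0) F" if "a \<in> l1" for a
    using H that by simp
  have z: "ipi (m \<alpha>) = (\<lambda>_. 0)" for \<alpha> by (rule ipi_zero[OF inf m1 m2])
  define a :: "'i mat" where "a = dlt undefined"
  have e1: "n1 (\<lambda>x. mmul (ipi (m \<alpha>)) a x - a x) = 1" for \<alpha>
  proof -
    have "(\<lambda>x. mmul (ipi (m \<alpha>)) a x - a x) = (\<lambda>x. (-1) * a x)"
      by (simp add: z mmul_def fun_eq_iff case_prod_unfold)
    moreover have "n1 (\<lambda>x. (-1) * a x) = n1 a" by (simp add: n1_def norm_mult)
    ultimately show ?thesis by (simp add: a_def)
  qed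
  have "((\<lambda>\<alpha>. n1 (\<lambda>x. mmul (ipi (m \<alpha>)) a x - a x)) \<longlongrightarrow> 0) F" by (rule lim) (simp add: a_def)
  then have "((\<lambda>\<alpha>. 1 :: real) \<longlongrightarrow> 0) F" by (simp only: e1)
  then have "(1::real) = 0" using tendsto_unique[OF F tendsto_const] by blast
  then show False by simp
qed


lemma l1_fin: "finite (UNIV :: 'x set) \<Longrightarrow> (u :: 'x \<Rightarrow> complex) \<in> l1"
  by (rule l1_finite_support[of UNIV]) auto

definition dd :: "'i tens" where
  "dd = (\<lambda>((p, j), (k, l)). if j = undefined \<and> k = undefined \<and> p = l then 1 else 0)"

definition m0 :: "'i tens_bidual" where
  "m0 \<phi> = (if \<phi> \<in> tens_dual_space then \<phi> dd else 0)"

lemma lact_dd: "lact a dd = ract dd a"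
proof (rule ext)
  fix z :: "('a \<times> 'a) \<times> ('a \<times> 'a)"
  obtain i j k l where z: "z = ((i, j), (k, l))" by (metis prod.collapse)
  have "lact a dd z = infsum (\<lambda>p. a (i, p) * dd ((p, j), (k, l))) UNIV"
    unfolding z lact_def by simp
  also have "\<dots> = infsum (\<lambda>p. if p = l then (if j = undefined \<and> k = undefined then a (i, l) else 0) else 0) UNIV"
    by (rule infsum_cong) (simp add: dd_def)
  also have "\<dots> = (if j = undefined \<and> k = undefined then a (i, l) else 0)" by (simp add: infsum_single)
  also have "\<dots> = infsum (\<lambda>p. if p = i then (if j = undefined \<and> k = undefined then a (i, l) else 0) else 0) UNIV"
    by (simp add: infsum_single)
  also have "\<dots> = infsum (\<lambda>p. dd ((i, j), (k, p)) * a (p, l)) UNIV"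
    by (rule infsum_cong) (auto simp: dd_def)
  also have "\<dots> = ract dd a z"
    unfolding z ract_def by simp
  finally show "lact a dd z = ract dd a z" .
qed

lemma m0_bidual: assumes fin: "finite (UNIV :: 'i set)"
  shows "(m0 :: 'i tens_bidual) \<in> tens_bidual_space"
proof -
  have fin2: "finite (UNIV :: (('i \<times> 'i) \<times> ('i \<times> 'i)) set)"
    using fin by (simp add: finite_Prod_UNIV)
  have d: "(dd :: 'i tens) \<in> l1" by (rule l1_fin[OF fin2])
  have "\<forall>u\<in>tens_dual_space. \<forall>v\<in>tens_dual_space. (m0 :: 'i tens_bidual) (\<lambda>y. u y + v y) = m0 u + m0 v"
    using dual_space_add unfolding m0_def tens_dual_space_def by auto
  moreover have "\<forall>c. \<forall>u\<in>tens_dual_space. (m0 :: 'i tens_bidual) (\<lambda>y. c * u y) = c * m0 u"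
    using dual_space_cmult unfolding m0_def tens_dual_space_def by auto
  moreover have "\<forall>u\<in>tens_dual_space. norm ((m0 :: 'i tens_bidual) u) \<le> n1 (dd :: 'i tens) * dual_norm l1 n1 u"
  proof (intro ballI)
    fix u :: "'i tens_dual" assume "u \<in> tens_dual_space"
    then show "norm ((m0 :: 'i tens_bidual) u) \<le> n1 (dd :: 'i tens) * dual_norm l1 n1 u"
      using DN3[OF _ d, of u] by (simp add: m0_def mult.commute)
  qed
  then have "\<exists>K. \<forall>u\<in>tens_dual_space. norm ((m0 :: 'i tens_bidual) u) \<le> K * dual_norm l1 n1 u" by blast
  moreover have "\<forall>u. u \<notin> tens_dual_space \<longrightarrow> (m0 :: 'i tens_bidual) u = 0" unfolding m0_def by simp
  ultimately show ?thesis unfolding tens_bidual_space_def dual_space_def by blast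
qed

lemma m0_comm: assumes fin: "finite (UNIV :: 'i set)" and a: "a \<in> (l1 :: 'i mat set)" and T: "T \<in> sigma_wc"
  shows "m0 (dract T a) = m0 (dlact a T)"
proof -
  have fin2: "finite (UNIV :: (('i \<times> 'i) \<times> ('i \<times> 'i)) set)"
    using fin by (simp add: finite_Prod_UNIV)
  have d: "(dd :: 'i tens) \<in> l1" by (rule l1_fin[OF fin2])
  have c1: "continuous_map wstar_top weak_tens_dual_top (\<lambda>a. dlact a T)"
    and c2: "continuous_map wstar_top weak_tens_dual_top (\<lambda>a. dract T a)"
    using T unfolding sigma_wc_def by auto
  have "dlact a T \<in> tens_dual_space"
    using continuous_map_image_subset_topspace[OF c1] a by (auto simp: topspace_wstar topspace_weak)
  moreover have "dract T a \<in> tens_dual_space"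
    using continuous_map_image_subset_topspace[OF c2] a by (auto simp: topspace_wstar topspace_weak)
  ultimately show ?thesis unfolding m0_def using d by (simp add: dlact_def dract_def lact_dd)
qed

lemma ipi_m0: assumes fin: "finite (UNIV :: 'i set)"
  shows "ipi (m0 :: 'i tens_bidual) = (\<lambda>(i, l). if i = l then 1 else 0)"
proof (rule ext)
  fix x :: "'i \<times> 'i"
  obtain i l where x: "x = (i, l)" by (cases x)
  have fin2: "finite (UNIV :: (('i \<times> 'i) \<times> ('i \<times> 'i)) set)"
    using fin by (simp add: finite_Prod_UNIV)
  have d: "(dd :: 'i tens) \<in> l1" by (rule l1_fin[OF fin2])
  have "ipi (m0 :: 'i tens_bidual) x = psi (i, l) dd" by (simp add: ipi_eq m0_def psi_dual x)
  also have "\<dots> = pimap dd (i, l)" by (simp add: psi_def d)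
  also have "\<dots> = infsum (\<lambda>j. dd ((i, j), (j, l))) UNIV" by (simp add: pimap_def)
  also have "\<dots> = infsum (\<lambda>j::'i. if j = undefined then (if i = l then 1 else 0) else 0) UNIV"
    by (rule infsum_cong) (auto simp: dd_def)
  also have "\<dots> = (\<lambda>(i, l). if i = l then 1 else 0) x" by (simp add: infsum_single x)
  finally show "ipi m0 x = (\<lambda>(i, l). if i = l then 1 else 0) x" .
qed

lemma finite_imp_amenable:
  assumes fin: "finite (UNIV :: 'i set)"
  shows "johnson_pseudo_connes_amenable TYPE('i)"
proof -
  have mm: "mmul (ipi (m0 :: 'i tens_bidual)) a = a" for a :: "'i mat"
  proof (rule ext)
    fix x :: "'i \<times> 'i"
    obtain i k where x: "x = (i, k)" by (cases x)
    have "mmul (ipi (m0 :: 'i tens_bidual)) a x = infsum (\<lambda>j. if j = i then a (i, k) else 0) UNIV"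
      unfolding ipi_m0[OF fin] mmul_def x by simp (rule infsum_cong, auto)
    then show "mmul (ipi (m0 :: 'i tens_bidual)) a x = a x" by (simp add: infsum_single x)
  qed
  have "\<not> eventually (\<lambda>_. False) (top :: 'i tens_bidual filter)" by (simp add: eventually_top)
  then have topbot: "(top :: 'i tens_bidual filter) \<noteq> bot" by (metis eventually_bot)
  have "(top :: 'i tens_bidual filter) \<noteq> bot \<and>
        (\<forall>\<alpha>. (\<lambda>_. (m0 :: 'i tens_bidual)) \<alpha> \<in> tens_bidual_space \<and>
              (\<forall>a \<in> (l1 :: 'i mat set). \<forall>T \<in> sigma_wc. (\<lambda>_. (m0 :: 'i tens_bidual)) \<alpha> (dract T a) = (\<lambda>_. (m0 :: 'i tens_bidual)) \<alpha> (dlact a T))) \<and>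
        (\<forall>a \<in> (l1 :: 'i mat set).
           ((\<lambda>\<alpha>. n1 (\<lambda>x. mmul (ipi ((\<lambda>_. (m0 :: 'i tens_bidual)) \<alpha>)) a x - a x)) \<longlongrightarrow> 0) top)"
    using m0_bidual[OF fin] m0_comm[OF fin] topbot by (simp add: mm)
  then show ?thesis unfolding johnson_pseudo_connes_amenable_def
    by (intro exI[where x="top :: 'i tens_bidual filter"] exI[where x="\<lambda>_. (m0 :: 'i tens_bidual)"])
qed

theorem theorem3p2:
  "johnson_pseudo_connes_amenable TYPE('i) \<longleftrightarrow> finite (UNIV :: 'i set)"
  using amenable_imp_finite finite_imp_amenable by blast


end
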